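(* Let $p\in(1,\infty)$ and $q\in[1,\infty]$. For every $k\in\mathbb N$ the unit vector basis of $\ell_q^k$ belongs to $\{X_p^{q,\omega}\}_k$.
   Context: Define $X^{q,0}_p=\mathbb R$ and inductively $X^{q,k}_p=\mathbb R\oplus_q\ell_p(X^{q,k-1}_p)$ (the $\ell_q$-direct sum of $\mathbb R$ with the $\ell_p$-sum of countably many copies of $X^{q,k-1}_p$), and $X^{q,\omega}_p=(\bigoplus_{k=0}^\infty X^{q,k}_p)_{\ell_p}$. For a Banach space $X$, $\{X\}_k$ is the set of norms $E$ on $\mathbb R^k$ for which the unit vector basis $(e_j)$ is normalized and monotone and such that: for every $\varepsilon>0$, for every closed finite-codimensional $X_1$ there is $x_1\in S_{X_1}$, ..., for every closed finite-codimensional $X_k$ there is $x_k\in S_{X_k}$, with $(x_j)_{j=1}^k$ $(1+\varepsilon)$-equivalent to $(e_j)_{j=1}^k$ ($C$-equivalent meaning $\frac1A\|\sum a_ix_i\|\le\|\sum a_ie_i\|\le B\|\sum a_ix_i\|$ with $AB\le C$). *)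

theory Defs
  imports "HOL-Analysis.Analysis"
begin

text \<open>An element of X^{q,k}_p is represented as a tree-indexed family of reals:
  the coordinate at the empty list is the R-summand, and the coordinates at
  lists (n # l) form the n-th copy of X^{q,k-1}_p in the l_p-sum.\<close>

definition qcomb :: "ereal \<Rightarrow> real \<Rightarrow> real \<Rightarrow> real" where
  "qcomb q a b = (if q = \<infinity> then max a b
                  else (a powr real_of_ereal q + b powr real_of_ereal q) powr (1 / real_of_ereal q))"

definition subtree :: "nat \<Rightarrow> (nat list \<Rightarrow> real) \<Rightarrow> (nat list \<Rightarrow> real)" where
  "subtree n x = (\<lambda>l. x (n # l))"

fun Xnorm :: "real \<Rightarrow> ereal \<Rightarrow> nat \<Rightarrow> (nat list \<Rightarrow> real) \<Rightarrow> real" where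
  "Xnorm p q 0 x = \<bar>x []\<bar>"
| "Xnorm p q (Suc k) x =
     qcomb q \<bar>x []\<bar> ((\<Sum>n. Xnorm p q k (subtree n x) powr p) powr (1 / p))"

fun Xmem :: "real \<Rightarrow> ereal \<Rightarrow> nat \<Rightarrow> (nat list \<Rightarrow> real) \<Rightarrow> bool" where
  "Xmem p q 0 x = (\<forall>l. l \<noteq> [] \<longrightarrow> x l = 0)"
| "Xmem p q (Suc k) x =
     ((\<forall>n. Xmem p q k (subtree n x)) \<and> summable (\<lambda>n. Xnorm p q k (subtree n x) powr p))"

type_synonym vec = "nat \<Rightarrow> nat list \<Rightarrow> real"

text \<open>X^{q,omega}_p = (sum_k X^{q,k}_p)_{l_p}; the k-th component of x is x k.\<close>
definition Xomega :: "real \<Rightarrow> ereal \<Rightarrow> vec set" where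
  "Xomega p q = {x. (\<forall>k. Xmem p q k (x k)) \<and> summable (\<lambda>k. Xnorm p q k (x k) powr p)}"

definition Xomega_norm :: "real \<Rightarrow> ereal \<Rightarrow> vec \<Rightarrow> real" where
  "Xomega_norm p q x = (\<Sum>k. Xnorm p q k (x k) powr p) powr (1 / p)"

definition vadd :: "vec \<Rightarrow> vec \<Rightarrow> vec" where
  "vadd x y = (\<lambda>k l. x k l + y k l)"

definition vscale :: "real \<Rightarrow> vec \<Rightarrow> vec" where
  "vscale c x = (\<lambda>k l. c * x k l)"

definition vzero :: vec where
  "vzero = (\<lambda>k l. 0)"

definition vsum :: "nat \<Rightarrow> (nat \<Rightarrow> vec) \<Rightarrow> vec" where
  "vsum m f = (\<lambda>k l. \<Sum>i<m. f i k l)"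

definition vdiff :: "vec \<Rightarrow> vec \<Rightarrow> vec" where
  "vdiff x y = (\<lambda>k l. x k l - y k l)"

definition lin_subspace :: "vec set \<Rightarrow> vec set \<Rightarrow> bool" where
  "lin_subspace V Y \<longleftrightarrow> Y \<subseteq> V \<and> vzero \<in> Y \<and>
     (\<forall>x\<in>Y. \<forall>y\<in>Y. vadd x y \<in> Y) \<and> (\<forall>c. \<forall>x\<in>Y. vscale c x \<in> Y)"

definition closed_in_space :: "vec set \<Rightarrow> (vec \<Rightarrow> real) \<Rightarrow> vec set \<Rightarrow> bool" where
  "closed_in_space V N Y \<longleftrightarrow>
     (\<forall>s x. (\<forall>n. s n \<in> Y) \<and> x \<in> V \<and> (\<lambda>n. N (vdiff (s n) x)) \<longlonglongrightarrow> 0 \<longrightarrow> x \<in> Y)"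

definition finite_codim :: "vec set \<Rightarrow> vec set \<Rightarrow> bool" where
  "finite_codim V Y \<longleftrightarrow> (\<exists>m f. (\<forall>i<m. f i \<in> V) \<and>
     (\<forall>v\<in>V. \<exists>y\<in>Y. \<exists>c. v = vadd y (vsum m (\<lambda>i. vscale (c i) (f i)))))"

definition closed_fincodim :: "vec set \<Rightarrow> (vec \<Rightarrow> real) \<Rightarrow> vec set \<Rightarrow> bool" where
  "closed_fincodim V N Y \<longleftrightarrow> lin_subspace V Y \<and> closed_in_space V N Y \<and> finite_codim V Y"

text \<open>Norms E on R^k are functions on nat \<Rightarrow> real depending only on the
  coordinates 0..k-1 (the paper's e_1..e_k are our e_0..e_{k-1}).\<close>

definition unit_vec :: "nat \<Rightarrow> nat \<Rightarrow> real" where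
  "unit_vec j = (\<lambda>i. if i = j then 1 else 0)"

definition is_norm_Rk :: "nat \<Rightarrow> ((nat \<Rightarrow> real) \<Rightarrow> real) \<Rightarrow> bool" where
  "is_norm_Rk k E \<longleftrightarrow>
     (\<forall>a b. (\<forall>i<k. a i = b i) \<longrightarrow> E a = E b) \<and>
     (\<forall>a. E a \<ge> 0) \<and>
     (\<forall>a. E a = 0 \<longleftrightarrow> (\<forall>i<k. a i = 0)) \<and>
     (\<forall>a b. E (\<lambda>i. a i + b i) \<le> E a + E b) \<and>
     (\<forall>c a. E (\<lambda>i. c * a i) = \<bar>c\<bar> * E a)"

definition basis_normalized_monotone :: "nat \<Rightarrow> ((nat \<Rightarrow> real) \<Rightarrow> real) \<Rightarrow> bool" where
  "basis_normalized_monotone k E \<longleftrightarrow>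
     (\<forall>j<k. E (unit_vec j) = 1) \<and>
     (\<forall>m n a. m \<le> n \<and> n \<le> k \<longrightarrow>
        E (\<lambda>i. if i < m then a i else 0) \<le> E (\<lambda>i. if i < n then a i else 0))"

definition C_equivalent :: "(vec \<Rightarrow> real) \<Rightarrow> nat \<Rightarrow> vec list \<Rightarrow> ((nat \<Rightarrow> real) \<Rightarrow> real) \<Rightarrow> real \<Rightarrow> bool" where
  "C_equivalent N k xs E C \<longleftrightarrow> (\<exists>A B. A > 0 \<and> B > 0 \<and> A * B \<le> C \<and>
     (\<forall>a. (1 / A) * N (vsum k (\<lambda>i. vscale (a i) (xs ! i))) \<le> E a \<and>
          E a \<le> B * N (vsum k (\<lambda>i. vscale (a i) (xs ! i)))))"

fun asym_game :: "vec set \<Rightarrow> (vec \<Rightarrow> real) \<Rightarrow> nat \<Rightarrow> (vec list \<Rightarrow> bool) \<Rightarrow> vec list \<Rightarrow> bool" where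
  "asym_game V N 0 P xs = P xs"
| "asym_game V N (Suc n) P xs =
     (\<forall>Y. closed_fincodim V N Y \<longrightarrow> (\<exists>x\<in>Y. N x = 1 \<and> asym_game V N n P (xs @ [x])))"

definition asym_struct :: "vec set \<Rightarrow> (vec \<Rightarrow> real) \<Rightarrow> nat \<Rightarrow> ((nat \<Rightarrow> real) \<Rightarrow> real) \<Rightarrow> bool" where
  "asym_struct V N k E \<longleftrightarrow> is_norm_Rk k E \<and> basis_normalized_monotone k E \<and>
     (\<forall>\<epsilon>>0. asym_game V N k (\<lambda>xs. C_equivalent N k xs E (1 + \<epsilon>)) [])"

definition lq_norm :: "ereal \<Rightarrow> nat \<Rightarrow> (nat \<Rightarrow> real) \<Rightarrow> real" where
  "lq_norm q k a = (if q = \<infinity> then (Max ({\<bar>a i\<bar> | i. i < k} \<union> {0}))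
                    else (\<Sum>i<k. \<bar>a i\<bar> powr real_of_ereal q) powr (1 / real_of_ereal q))"

end

theory Submission
  imports Defs
begin


definition G :: "real \<Rightarrow> (nat \<Rightarrow> real) \<Rightarrow> (nat \<Rightarrow> nat \<Rightarrow> real) \<Rightarrow> nat \<Rightarrow> nat list \<Rightarrow> real" where
  "G r a c s l = r * a (s + length l) * (\<Prod>t<length l. c (s+t) (l!t))"

definition nc :: "real \<Rightarrow> (nat \<Rightarrow> nat \<Rightarrow> real) \<Rightarrow> bool" where
  "nc p c \<longleftrightarrow> (\<forall>t. summable (\<lambda>n. \<bar>c t n\<bar> powr p) \<and> (\<Sum>n. \<bar>c t n\<bar> powr p) = 1)"

fun Rn :: "ereal \<Rightarrow> (nat \<Rightarrow> real) \<Rightarrow> nat \<Rightarrow> nat \<Rightarrow> real" where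
  "Rn q a 0 s = \<bar>a s\<bar>"
| "Rn q a (Suc K) s = qcomb q \<bar>a s\<bar> (Rn q a K (Suc s))"

lemma G_root: "G r a c s [] = r * a s"
  by (simp add: G_def)

lemma G_sub: "subtree n (G r a c s) = G (r * c s n) a c (Suc s)"
  unfolding subtree_def G_def
  apply (rule ext)
  apply (simp only: length_Cons prod.lessThan_Suc_shift)
  apply simp
  done

lemma qcomb_nonneg: "0 \<le> a \<Longrightarrow> 0 \<le> b \<Longrightarrow> 0 \<le> qcomb q a b"
  by (simp add: qcomb_def le_max_iff_disj)

lemma q_real: "1 \<le> q \<Longrightarrow> q \<noteq> \<infinity> \<Longrightarrow> 1 \<le> real_of_ereal q"
  by (cases q rule: ereal_cases) auto

lemma qcomb_hom:
  assumes "0 \<le> r" "0 \<le> a" "0 \<le> b" "1 \<le> q"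
  shows "qcomb q (r*a) (r*b) = r * qcomb q a b"
proof (cases "q = \<infinity>")
  case True then show ?thesis using assms by (simp add: qcomb_def max_mult_distrib_left)
next
  case False
  define Q where "Q = real_of_ereal q"
  have Q: "1 \<le> Q" using q_real[OF assms(4) False] Q_def by simp
  have "(r*a) powr Q + (r*b) powr Q = r powr Q * (a powr Q + b powr Q)"
    using assms by (simp add: powr_mult algebra_simps)
  then have "((r*a) powr Q + (r*b) powr Q) powr (1/Q) = (r powr Q) powr (1/Q) * (a powr Q + b powr Q) powr (1/Q)"
    by (simp add: powr_mult)
  also have "(r powr Q) powr (1/Q) = r" using Q assms by (simp add: powr_powr)
  finally show ?thesis using False by (simp add: qcomb_def Q_def)
qed

lemma Rn_nonneg: "0 \<le> Rn q a K s"
  by (induction K arbitrary: s) (auto intro: qcomb_nonneg)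

lemma Xnorm_G:
  assumes p: "p > 0" and q: "1 \<le> q" and c: "nc p c"
  shows "Xnorm p q K (G r a c s) = \<bar>r\<bar> * Rn q a K s"
proof (induction K arbitrary: r s)
  case 0
  then show ?case by (simp add: G_root abs_mult)
next
  case (Suc K)
  define X where "X = \<bar>r\<bar> * Rn q a K (Suc s)"
  have X0: "0 \<le> X" using Rn_nonneg X_def by simp
  have e1: "Xnorm p q K (subtree n (G r a c s)) powr p = X powr p * \<bar>c s n\<bar> powr p" for n
    using Suc X0 by (simp add: G_sub X_def abs_mult powr_mult[symmetric] mult_ac)
  have sm: "summable (\<lambda>n. \<bar>c s n\<bar> powr p)" and s1: "(\<Sum>n. \<bar>c s n\<bar> powr p) = 1"
    using c by (auto simp: nc_def)
  have "(\<Sum>n. Xnorm p q K (subtree n (G r a c s)) powr p) = X powr p"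
    unfolding e1 using suminf_mult[OF sm, of "X powr p"] s1 by simp
  then have e2: "(\<Sum>n. Xnorm p q K (subtree n (G r a c s)) powr p) powr (1/p) = X"
    using p X0 by (simp add: powr_powr)
  show ?case
    using e2 qcomb_hom[of "\<bar>r\<bar>" "\<bar>a s\<bar>" "Rn q a K (Suc s)" q] q Rn_nonneg[of q a K "Suc s"]
    by (simp add: G_root abs_mult X_def)
qed

lemma Xmem_G:
  assumes p: "p > 0" and q: "1 \<le> q" and c: "nc p c" and a: "\<And>d. d > s + K \<Longrightarrow> a d = 0"
  shows "Xmem p q K (G r a c s)"
  using a
proof (induction K arbitrary: r s)
  case 0
  then show ?case by (simp add: G_def)
next
  case (Suc K)
  have sm: "summable (\<lambda>n. \<bar>c s n\<bar> powr p)"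
    using c by (auto simp: nc_def)
  have e1: "Xnorm p q K (subtree n (G r a c s)) powr p = (\<bar>r\<bar> * Rn q a K (Suc s)) powr p * \<bar>c s n\<bar> powr p" for n
    using Rn_nonneg[of q a K "Suc s"] by (simp add: G_sub Xnorm_G[OF p q c] abs_mult powr_mult[symmetric] mult_ac)
  show ?case
    using Suc.IH[of "Suc s"] Suc.prems sm unfolding Xmem.simps e1
    by (auto simp: G_sub intro: summable_mult[OF sm])
qed



definition lift :: "nat \<Rightarrow> (nat \<Rightarrow> real) \<Rightarrow> nat \<Rightarrow> real" where
  "lift k a d = (if 1 \<le> d \<and> d \<le> k then a (d - 1) else 0)"

lemma Rn_fin:
  assumes "q \<noteq> \<infinity>" "1 \<le> q"
  shows "Rn q a K s = (\<Sum>d\<in>{s..s+K}. \<bar>a d\<bar> powr real_of_ereal q) powr (1 / real_of_ereal q)"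
proof (induction K arbitrary: s)
  define Q where "Q = real_of_ereal q"
  have Q: "1 \<le> Q" using q_real[OF assms(2,1)] Q_def by simp
  case 0
  show ?case using Q by (simp add: powr_powr Q_def[symmetric])
next
  define Q where "Q = real_of_ereal q"
  have Q: "1 \<le> Q" using q_real[OF assms(2,1)] Q_def by simp
  case (Suc K)
  define S where "S = (\<Sum>d\<in>{Suc s..Suc s+K}. \<bar>a d\<bar> powr Q)"
  have S0: "0 \<le> S" unfolding S_def by (rule sum_nonneg) simp
  have e: "(S powr (1/Q)) powr Q = S" using Q S0 by (simp add: powr_powr)
  have ins: "{s..s + Suc K} = insert s {Suc s..Suc s+K}" by auto
  have "Rn q a (Suc K) s = (\<bar>a s\<bar> powr Q + S) powr (1/Q)"
    using Suc[of "Suc s"] assms(1) e by (simp add: qcomb_def Q_def[symmetric] S_def)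
  also have "\<bar>a s\<bar> powr Q + S = (\<Sum>d\<in>{s..s+Suc K}. \<bar>a d\<bar> powr Q)"
    unfolding ins S_def by simp
  finally show ?case by (simp add: Q_def)
qed

lemma Rn_inf:
  assumes "q = \<infinity>"
  shows "Rn q a K s = Max ((\<lambda>d. \<bar>a d\<bar>) ` {s..s+K})"
proof (induction K arbitrary: s)
  case 0
  then show ?case by simp
next
  case (Suc K)
  have ins: "{s..s + Suc K} = insert s {Suc s..Suc s+K}" by auto
  show ?case using Suc[of "Suc s"] assms unfolding ins
    by (simp add: qcomb_def)
qed

lemma lq_inf: "q = \<infinity> \<Longrightarrow> lq_norm q k a = Max (insert 0 ((\<lambda>i. \<bar>a i\<bar>) ` {..<k}))"
  unfolding lq_norm_def
  by (auto intro!: arg_cong[where f=Max])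

lemma lq_fin: "q \<noteq> \<infinity> \<Longrightarrow> lq_norm q k a = (\<Sum>i<k. \<bar>a i\<bar> powr real_of_ereal q) powr (1 / real_of_ereal q)"
  unfolding lq_norm_def by simp

lemma Rn_lift:
  assumes "1 \<le> q"
  shows "Rn q (lift k a) k 0 = lq_norm q k a"
proof (cases "q = \<infinity>")
  case True
  have "(\<lambda>d. \<bar>lift k a d\<bar>) ` {0..k} = insert 0 ((\<lambda>i. \<bar>a i\<bar>) ` {..<k})"
  proof (rule set_eqI, rule iffI)
    fix x assume "x \<in> (\<lambda>d. \<bar>lift k a d\<bar>) ` {0..k}"
    then obtain d where d: "d \<le> k" "x = \<bar>lift k a d\<bar>" by auto
    then show "x \<in> insert 0 ((\<lambda>i. \<bar>a i\<bar>) ` {..<k})"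
      by (cases d) (auto simp: lift_def)
  next
    fix x assume "x \<in> insert 0 ((\<lambda>i. \<bar>a i\<bar>) ` {..<k})"
    then consider "x = 0" | i where "i < k" "x = \<bar>a i\<bar>" by auto
    then show "x \<in> (\<lambda>d. \<bar>lift k a d\<bar>) ` {0..k}"
    proof cases
      case 1 then show ?thesis by (auto simp: lift_def intro!: image_eqI[where x=0])
    next
      case 2 then show ?thesis by (auto simp: lift_def intro!: image_eqI[where x="Suc i"])
    qed
  qed
  then show ?thesis using True by (simp add: Rn_inf lq_inf)
next
  case False
  define Q where "Q = real_of_ereal q"
  have Q: "1 \<le> Q" using q_real[OF assms False] Q_def by simp
  have "(\<Sum>d\<in>{0..k}. \<bar>lift k a d\<bar> powr Q) = (\<Sum>i<k. \<bar>a i\<bar> powr Q)"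
    using Q by (simp add: atLeast0AtMost sum.atMost_shift lift_def)
  then show ?thesis using False assms by (simp add: Rn_fin lq_fin Q_def)
qed



lemma cvx_pt:
  fixes u v t Q :: real
  assumes "0 \<le> u" "0 \<le> v" "0 \<le> t" "t \<le> 1" "1 \<le> Q"
  shows "(t * u + (1 - t) * v) powr Q \<le> t * u powr Q + (1-t) * v powr Q"
proof -
  consider "u = 0" | "v = 0" | "0 < u" "0 < v" using assms by linarith
  then show ?thesis
  proof cases
    case 1
    have "(1-t) powr Q \<le> 1 - t"
      using assms powr_le_one_le[of "1-t" Q] by (cases "t = 1") auto
    then have "(1-t) powr Q * v powr Q \<le> (1-t) * v powr Q"
      by (simp add: mult_right_mono)
    then show ?thesis using 1 assms by (simp add: powr_mult)
  next
    case 2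
    have "t powr Q \<le> t"
      using assms powr_le_one_le[of t Q] by (cases "t = 0") auto
    then have "t powr Q * u powr Q \<le> t * u powr Q"
      by (simp add: mult_right_mono)
    then show ?thesis using 2 assms by (simp add: powr_mult)
  next
    case 3
    have "convex_on {0<..} (\<lambda>x::real. x powr Q)" using powr_convex assms by simp
    from convex_onD[OF this, of "1-t" u v] show ?thesis using 3 assms
      by (simp add: algebra_simps)
  qed
qed

lemma minkowski:
  fixes a b :: "nat \<Rightarrow> real" and Q :: real
  assumes Q: "1 \<le> Q"
  shows "(\<Sum>i<k. \<bar>a i + b i\<bar> powr Q) powr (1/Q)
     \<le> (\<Sum>i<k. \<bar>a i\<bar> powr Q) powr (1/Q) + (\<Sum>i<k. \<bar>b i\<bar> powr Q) powr (1/Q)"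
proof -
  define A where "A = (\<Sum>i<k. \<bar>a i\<bar> powr Q) powr (1/Q)"
  define B where "B = (\<Sum>i<k. \<bar>b i\<bar> powr Q) powr (1/Q)"
  have A0: "0 \<le> A" "0 \<le> B" unfolding A_def B_def by auto
  have SA: "A powr Q = (\<Sum>i<k. \<bar>a i\<bar> powr Q)" unfolding A_def using Q
    by (simp add: powr_powr sum_nonneg)
  have SB: "B powr Q = (\<Sum>i<k. \<bar>b i\<bar> powr Q)" unfolding B_def using Q
    by (simp add: powr_powr sum_nonneg)
  show ?thesis
  proof (cases "A = 0 \<or> B = 0")
    case True
    then show ?thesis
    proof
      assume "A = 0"
      then have "(\<Sum>i<k. \<bar>a i\<bar> powr Q) = 0" using SA Q by simp
      then have "\<forall>i<k. a i = 0" by (simp add: sum_nonneg_eq_0_iff)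
      then have "(\<Sum>i<k. \<bar>a i + b i\<bar> powr Q) = (\<Sum>i<k. \<bar>b i\<bar> powr Q)" by simp
      then show ?thesis using \<open>A = 0\<close> by (simp add: A_def[symmetric] B_def[symmetric])
    next
      assume "B = 0"
      then have "(\<Sum>i<k. \<bar>b i\<bar> powr Q) = 0" using SB Q by simp
      then have "\<forall>i<k. b i = 0" by (simp add: sum_nonneg_eq_0_iff)
      then have "(\<Sum>i<k. \<bar>a i + b i\<bar> powr Q) = (\<Sum>i<k. \<bar>a i\<bar> powr Q)" by simp
      then show ?thesis using \<open>B = 0\<close> by (simp add: A_def[symmetric] B_def[symmetric])
    qed
  next
    case False
    then have Ap: "0 < A" "0 < B" using A0 by auto
    define T where "T = A + B"
    define t where "t = A / T"
    have Tp: "0 < T" using Ap T_def by simp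
    have t01: "0 \<le> t" "t \<le> 1" using Ap Tp by (auto simp: t_def T_def)
    have t1: "1 - t = B / T" using Tp by (simp add: t_def T_def field_simps)
    have pt: "(\<bar>a i + b i\<bar> / T) powr Q \<le> t * (\<bar>a i\<bar> / A) powr Q + (1-t) * (\<bar>b i\<bar> / B) powr Q" for i
    proof -
      have "\<bar>a i + b i\<bar> / T \<le> t * (\<bar>a i\<bar> / A) + (1-t) * (\<bar>b i\<bar> / B)"
        using Ap Tp unfolding t1 by (simp add: t_def divide_right_mono abs_triangle_ineq add_divide_distrib[symmetric])
      then have "(\<bar>a i + b i\<bar> / T) powr Q \<le> (t * (\<bar>a i\<bar> / A) + (1-t) * (\<bar>b i\<bar> / B)) powr Q"
        using Q Tp by (intro powr_mono2) auto
      also have "\<dots> \<le> t * (\<bar>a i\<bar> / A) powr Q + (1-t) * (\<bar>b i\<bar> / B) powr Q"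
        using Ap t01 Q by (intro cvx_pt) auto
      finally show ?thesis .
    qed
    have "(\<Sum>i<k. (\<bar>a i + b i\<bar> / T) powr Q) \<le> (\<Sum>i<k. t * (\<bar>a i\<bar> / A) powr Q + (1-t) * (\<bar>b i\<bar> / B) powr Q)"
      by (rule sum_mono) (rule pt)
    also have "\<dots> = t * ((\<Sum>i<k. \<bar>a i\<bar> powr Q) / A powr Q) + (1-t) * ((\<Sum>i<k. \<bar>b i\<bar> powr Q) / B powr Q)"
      using Ap by (simp add: sum.distrib sum_distrib_left sum_divide_distrib powr_divide)
    also have "\<dots> = 1" using Ap Q by (simp add: SA[symmetric] SB[symmetric])
    finally have "(\<Sum>i<k. \<bar>a i + b i\<bar> powr Q) / T powr Q \<le> 1"
      using Tp by (simp add: sum_divide_distrib powr_divide)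
    then have "(\<Sum>i<k. \<bar>a i + b i\<bar> powr Q) \<le> T powr Q" using Tp by (simp add: divide_le_eq)
    then have "(\<Sum>i<k. \<bar>a i + b i\<bar> powr Q) powr (1/Q) \<le> (T powr Q) powr (1/Q)"
      using Q by (intro powr_mono2) (auto intro: sum_nonneg)
    also have "\<dots> = T" using Tp Q by (simp add: powr_powr)
    finally show ?thesis by (simp add: T_def A_def B_def)
  qed
qed

lemma lq_is_norm:
  assumes "1 \<le> q"
  shows "is_norm_Rk k (lq_norm q k)"
proof (cases "q = \<infinity>")
  case True
  have fin: "finite (insert 0 ((\<lambda>i. \<bar>a i\<bar>) ` {..<k}))" for a :: "nat \<Rightarrow> real" by simp
  have ge: "x \<le> Max (insert 0 ((\<lambda>i. \<bar>a i\<bar>) ` {..<k}))" if "x \<in> insert 0 ((\<lambda>i. \<bar>a i\<bar>) ` {..<k})" for x a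
    using that by (intro Max_ge) auto
  show ?thesis unfolding is_norm_Rk_def lq_inf[OF True]
  proof (intro conjI allI impI)
    fix a b :: "nat \<Rightarrow> real" assume "\<forall>i<k. a i = b i"
    then have "(\<lambda>i. \<bar>a i\<bar>) ` {..<k} = (\<lambda>i. \<bar>b i\<bar>) ` {..<k}" by auto
    then show "Max (insert 0 ((\<lambda>i. \<bar>a i\<bar>) ` {..<k})) = Max (insert 0 ((\<lambda>i. \<bar>b i\<bar>) ` {..<k}))" by simp
  next
    fix a :: "nat \<Rightarrow> real"
    show "0 \<le> Max (insert 0 ((\<lambda>i. \<bar>a i\<bar>) ` {..<k}))" using ge by blast
  next
    fix a :: "nat \<Rightarrow> real"
    show "(Max (insert 0 ((\<lambda>i. \<bar>a i\<bar>) ` {..<k})) = 0) = (\<forall>i<k. a i = 0)"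
    proof
      assume h: "Max (insert 0 ((\<lambda>i. \<bar>a i\<bar>) ` {..<k})) = 0"
      show "\<forall>i<k. a i = 0"
      proof (intro allI impI)
        fix i assume "i < k"
        then have "\<bar>a i\<bar> \<le> 0" using ge[of "\<bar>a i\<bar>" a] h by auto
        then show "a i = 0" by simp
      qed
    next
      assume "\<forall>i<k. a i = 0"
      then have "insert 0 ((\<lambda>i. \<bar>a i\<bar>) ` {..<k}) = {0}" by auto
      then show "Max (insert 0 ((\<lambda>i. \<bar>a i\<bar>) ` {..<k})) = 0" by (simp only: Max_singleton)
    qed
  next
    fix a b :: "nat \<Rightarrow> real"
    show "Max (insert 0 ((\<lambda>i. \<bar>a i + b i\<bar>) ` {..<k}))
       \<le> Max (insert 0 ((\<lambda>i. \<bar>a i\<bar>) ` {..<k})) + Max (insert 0 ((\<lambda>i. \<bar>b i\<bar>) ` {..<k}))"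
    proof (subst Max_le_iff, simp, simp, intro ballI)
      fix x assume "x \<in> insert 0 ((\<lambda>i. \<bar>a i + b i\<bar>) ` {..<k})"
      then consider "x = 0" | i where "i < k" "x = \<bar>a i + b i\<bar>" by auto
      then show "x \<le> Max (insert 0 ((\<lambda>i. \<bar>a i\<bar>) ` {..<k})) + Max (insert 0 ((\<lambda>i. \<bar>b i\<bar>) ` {..<k}))"
      proof cases
        case 1 then show ?thesis using ge[of 0 a] ge[of 0 b] by auto
      next
        case 2
        have "\<bar>a i\<bar> \<le> Max (insert 0 ((\<lambda>i. \<bar>a i\<bar>) ` {..<k}))" using 2 by (intro ge) auto
        moreover have "\<bar>b i\<bar> \<le> Max (insert 0 ((\<lambda>i. \<bar>b i\<bar>) ` {..<k}))" using 2 by (intro ge) auto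
        ultimately show ?thesis using 2 abs_triangle_ineq[of "a i" "b i"] by linarith
      qed
    qed
  next
    fix c :: real and a :: "nat \<Rightarrow> real"
    have m: "mono (\<lambda>x. \<bar>c\<bar> * x)" by (rule monoI) (simp add: mult_left_mono)
    have "insert 0 ((\<lambda>i. \<bar>c * a i\<bar>) ` {..<k}) = (\<lambda>x. \<bar>c\<bar> * x) ` insert 0 ((\<lambda>i. \<bar>a i\<bar>) ` {..<k})"
      by (auto simp: abs_mult image_image)
    then show "Max (insert 0 ((\<lambda>i. \<bar>c * a i\<bar>) ` {..<k})) = \<bar>c\<bar> * Max (insert 0 ((\<lambda>i. \<bar>a i\<bar>) ` {..<k}))"
      using mono_Max_commute[OF m, of "insert 0 ((\<lambda>i. \<bar>a i\<bar>) ` {..<k})"] by simp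
  qed
next
  case False
  define Q where "Q = real_of_ereal q"
  have Q: "1 \<le> Q" using q_real[OF assms False] Q_def by simp
  show ?thesis unfolding is_norm_Rk_def lq_fin[OF False] Q_def[symmetric]
  proof (intro conjI allI impI)
    fix a b :: "nat \<Rightarrow> real" assume "\<forall>i<k. a i = b i"
    then show "(\<Sum>i<k. \<bar>a i\<bar> powr Q) powr (1 / Q) = (\<Sum>i<k. \<bar>b i\<bar> powr Q) powr (1 / Q)" by simp
  next
    fix a :: "nat \<Rightarrow> real"
    show "0 \<le> (\<Sum>i<k. \<bar>a i\<bar> powr Q) powr (1 / Q)" by simp
  next
    fix a :: "nat \<Rightarrow> real"
    show "((\<Sum>i<k. \<bar>a i\<bar> powr Q) powr (1 / Q) = 0) = (\<forall>i<k. a i = 0)"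
      using Q by (auto simp add: sum_nonneg_eq_0_iff)
  next
    fix a b :: "nat \<Rightarrow> real"
    show "(\<Sum>i<k. \<bar>a i + b i\<bar> powr Q) powr (1 / Q) \<le> (\<Sum>i<k. \<bar>a i\<bar> powr Q) powr (1 / Q) + (\<Sum>i<k. \<bar>b i\<bar> powr Q) powr (1 / Q)"
      by (rule minkowski[OF Q])
  next
    fix c :: real and a :: "nat \<Rightarrow> real"
    have "(\<Sum>i<k. \<bar>c * a i\<bar> powr Q) = \<bar>c\<bar> powr Q * (\<Sum>i<k. \<bar>a i\<bar> powr Q)"
      by (simp add: abs_mult powr_mult sum_distrib_left)
    then have "(\<Sum>i<k. \<bar>c * a i\<bar> powr Q) powr (1/Q) = (\<bar>c\<bar> powr Q) powr (1/Q) * (\<Sum>i<k. \<bar>a i\<bar> powr Q) powr (1/Q)"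
      by (simp add: powr_mult sum_nonneg)
    then show "(\<Sum>i<k. \<bar>c * a i\<bar> powr Q) powr (1 / Q) = \<bar>c\<bar> * (\<Sum>i<k. \<bar>a i\<bar> powr Q) powr (1 / Q)"
      using Q by (simp add: powr_powr)
  qed
qed

lemma lq_bnm:
  assumes "1 \<le> q"
  shows "basis_normalized_monotone k (lq_norm q k)"
proof (cases "q = \<infinity>")
  case True
  show ?thesis unfolding basis_normalized_monotone_def lq_inf[OF True]
  proof (intro conjI allI impI)
    fix j assume "j < k"
    then have "insert 0 ((\<lambda>i. \<bar>unit_vec j i\<bar>) ` {..<k}) = {0, 1}"
      by (auto simp: unit_vec_def image_iff intro: bexI[where x=j])
    then show "Max (insert 0 ((\<lambda>i. \<bar>unit_vec j i\<bar>) ` {..<k})) = 1" by simp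
  next
    fix m n :: nat and a :: "nat \<Rightarrow> real" assume mn: "m \<le> n \<and> n \<le> k"
    have ge: "x \<le> Max (insert 0 ((\<lambda>i. \<bar>if i < n then a i else 0\<bar>) ` {..<k}))"
      if "x \<in> insert 0 ((\<lambda>i. \<bar>if i < n then a i else 0\<bar>) ` {..<k})" for x
      using that by (intro Max_ge) auto
    show "Max (insert 0 ((\<lambda>i. \<bar>if i < m then a i else 0\<bar>) ` {..<k}))
        \<le> Max (insert 0 ((\<lambda>i. \<bar>if i < n then a i else 0\<bar>) ` {..<k}))"
    proof (subst Max_le_iff, simp, simp, intro ballI)
      fix x assume "x \<in> insert 0 ((\<lambda>i. \<bar>if i < m then a i else 0\<bar>) ` {..<k})"
      then consider "x = 0" | i where "i < k" "x = \<bar>if i < m then a i else 0\<bar>" by auto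
      then show "x \<le> Max (insert 0 ((\<lambda>i. \<bar>if i < n then a i else 0\<bar>) ` {..<k}))"
      proof cases
        case 1 then show ?thesis using ge by auto
      next
        case 2
        show ?thesis
        proof (cases "i < m")
          case True
          then have "x = \<bar>if i < n then a i else 0\<bar>" using 2 mn by auto
          then show ?thesis using 2 by (intro ge) auto
        next
          case False
          then show ?thesis using 2 ge[of 0] by auto
        qed
      qed
    qed
  qed
next
  case False
  define Q where "Q = real_of_ereal q"
  have Q: "1 \<le> Q" using q_real[OF assms False] Q_def by simp
  show ?thesis unfolding basis_normalized_monotone_def lq_fin[OF False] Q_def[symmetric]
  proof (intro conjI allI impI)
    fix j assume "j < k"
    have "(\<Sum>i<k. \<bar>unit_vec j i\<bar> powr Q) = (\<Sum>i<k. if i = j then 1 else 0)"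
      by (rule sum.cong) (auto simp: unit_vec_def)
    also have "\<dots> = 1" using \<open>j < k\<close> by simp
    finally show "(\<Sum>i<k. \<bar>unit_vec j i\<bar> powr Q) powr (1 / Q) = 1" by simp
  next
    fix m n :: nat and a :: "nat \<Rightarrow> real" assume mn: "m \<le> n \<and> n \<le> k"
    have "(\<Sum>i<k. \<bar>if i < m then a i else 0\<bar> powr Q) \<le> (\<Sum>i<k. \<bar>if i < n then a i else 0\<bar> powr Q)"
      by (rule sum_mono) (use mn in auto)
    then show "(\<Sum>i<k. \<bar>if i < m then a i else 0\<bar> powr Q) powr (1 / Q) \<le> (\<Sum>i<k. \<bar>if i < n then a i else 0\<bar> powr Q) powr (1 / Q)"
      using Q by (intro powr_mono2) (auto intro: sum_nonneg)
  qed
qed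



definition vecof :: "nat \<Rightarrow> (nat list \<Rightarrow> real) \<Rightarrow> vec" where
  "vecof k T = (\<lambda>j. if j = k then T else (\<lambda>l. 0))"

definition xv :: "nat \<Rightarrow> (nat \<Rightarrow> nat \<Rightarrow> real) \<Rightarrow> nat \<Rightarrow> vec" where
  "xv k c i = vecof k (G 1 (lift k (unit_vec i)) c 0)"

lemma Xnorm_zero: "Xnorm p q j (\<lambda>l. 0) = 0"
proof (induction j)
  case 0 then show ?case by simp
next
  case (Suc j)
  have "subtree n (\<lambda>l. 0) = (\<lambda>l. 0)" for n by (simp add: subtree_def)
  then show ?case using Suc by (simp add: qcomb_def)
qed

lemma Xmem_zero: "Xmem p q j (\<lambda>l. 0)"
proof (induction j)
  case 0 then show ?case by simp
next
  case (Suc j)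
  have "subtree n (\<lambda>l. 0) = (\<lambda>l. 0)" for n by (simp add: subtree_def)
  then show ?case using Suc by (simp add: Xnorm_zero)
qed

lemma Xnorm_nonneg: "0 \<le> Xnorm p q j x"
proof (induction j arbitrary: x)
  case 0 then show ?case by simp
next
  case (Suc j) then show ?case by (simp add: qcomb_nonneg)
qed

lemma Xomega_norm_vecof:
  assumes p: "0 < p"
  shows "Xomega_norm p q (vecof k T) = Xnorm p q k T"
proof -
  have e: "(\<lambda>j. Xnorm p q j (vecof k T j) powr p) = (\<lambda>j. if j = k then Xnorm p q k T powr p else 0)"
    by (rule ext) (simp add: vecof_def Xnorm_zero)
  have "(\<Sum>j. Xnorm p q j (vecof k T j) powr p) = Xnorm p q k T powr p"
    unfolding e using sums_single[of k "\<lambda>_. Xnorm p q k T powr p"] sums_unique by force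
  then show ?thesis using p Xnorm_nonneg[of p q k T] by (simp add: Xomega_norm_def powr_powr)
qed

lemma vecof_mem:
  assumes "Xmem p q k T"
  shows "vecof k T \<in> Xomega p q"
proof -
  have e: "(\<lambda>j. Xnorm p q j (vecof k T j) powr p) = (\<lambda>j. if j = k then Xnorm p q k T powr p else 0)"
    by (rule ext) (simp add: vecof_def Xnorm_zero)
  have "summable (\<lambda>j. Xnorm p q j (vecof k T j) powr p)"
    unfolding e using sums_single[of k "\<lambda>_. Xnorm p q k T powr p"] sums_summable by force
  then show ?thesis using assms by (auto simp: Xomega_def vecof_def Xmem_zero)
qed

lemma lift_sum: "(\<Sum>i<k. a i * lift k (unit_vec i) d) = lift k a d"
proof (cases "1 \<le> d \<and> d \<le> k")
  case True
  have "(\<Sum>i<k. a i * lift k (unit_vec i) d) = (\<Sum>i<k. if i = d - 1 then a i else 0)"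
    using True by (intro sum.cong) (auto simp: lift_def unit_vec_def)
  also have "\<dots> = a (d - 1)" using True by auto
  finally show ?thesis using True by (simp add: lift_def)
next
  case False then have "lift k (unit_vec i) d = 0" for i by (auto simp add: lift_def)
  then show ?thesis using False by (auto simp add: lift_def)
qed

lemma vsum_xv: "vsum k (\<lambda>i. vscale (a i) (xv k c i)) = vecof k (G 1 (lift k a) c 0)"
proof (intro ext)
  fix kk l
  show "vsum k (\<lambda>i. vscale (a i) (xv k c i)) kk l = vecof k (G 1 (lift k a) c 0) kk l"
  proof (cases "kk = k")
    case True
    have "vsum k (\<lambda>i. vscale (a i) (xv k c i)) kk l
        = (\<Sum>i<k. a i * lift k (unit_vec i) (length l)) * (\<Prod>t<length l. c t (l!t))"
      using True by (simp add: vsum_def vscale_def xv_def vecof_def G_def sum_distrib_left mult_ac)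
    then show ?thesis using True by (simp add: lift_sum vecof_def G_def)
  next
    case False then show ?thesis by (simp add: vsum_def vscale_def xv_def vecof_def)
  qed
qed

lemma xv_explicit:
  assumes "i < k"
  shows "xv k c i kk l = (if kk = k \<and> length l = Suc i then (\<Prod>t<i. c t (l!t)) * c i (l!i) else 0)"
proof -
  have "lift k (unit_vec i) d = (if d = Suc i then 1 else 0)" for d
    using assms by (auto simp: lift_def unit_vec_def)
  then show ?thesis by (simp add: xv_def vecof_def G_def)
qed

lemma nc_upd:
  assumes "nc p c" "summable (\<lambda>n. \<bar>e n\<bar> powr p)" "(\<Sum>n. \<bar>e n\<bar> powr p) = 1"
  shows "nc p (c(i := e))"
  using assms by (simp add: nc_def)

lemma xv_mem:
  assumes "0 < p" "1 \<le> q" "nc p c"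
  shows "xv k c i \<in> Xomega p q"
  unfolding xv_def
  by (rule vecof_mem, rule Xmem_G[OF assms]) (simp add: lift_def)

lemma xv_comb_norm:
  assumes "0 < p" "1 \<le> q" "nc p c"
  shows "Xomega_norm p q (vsum k (\<lambda>i. vscale (a i) (xv k c i))) = lq_norm q k a"
  unfolding vsum_xv Xomega_norm_vecof[OF assms(1)] Xnorm_G[OF assms] Rn_lift[OF assms(2)] by simp

lemma xv_norm:
  assumes "0 < p" "1 \<le> q" "nc p c" "i < k"
  shows "Xomega_norm p q (xv k c i) = 1"
proof -
  have "Xomega_norm p q (xv k c i) = Xnorm p q k (G 1 (lift k (unit_vec i)) c 0)"
    by (simp add: xv_def Xomega_norm_vecof[OF assms(1)])
  also have "\<dots> = lq_norm q k (unit_vec i)"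
    by (simp add: Xnorm_G[OF assms(1-3)] Rn_lift[OF assms(2)])
  also have "\<dots> = 1" using lq_bnm[OF assms(2), of k] assms(4) by (simp add: basis_normalized_monotone_def)
  finally show ?thesis .
qed



lemma dep:
  fixes c :: "nat \<Rightarrow> nat \<Rightarrow> real"
  shows "finite J \<Longrightarrow> m < card J \<Longrightarrow> \<exists>d. (\<exists>j\<in>J. d j \<noteq> 0) \<and> (\<forall>i<m. (\<Sum>j\<in>J. d j * c j i) = 0)"
proof (induction m arbitrary: J c)
  case 0
  then have "J \<noteq> {}" by auto
  then show ?case by (intro exI[where x="\<lambda>_. 1"]) auto
next
  case (Suc m)
  show ?case
  proof (cases "\<forall>j\<in>J. c j m = 0")
    case True
    obtain d where d: "\<exists>j\<in>J. d j \<noteq> 0" "\<forall>i<m. (\<Sum>j\<in>J. d j * c j i) = 0"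
      using Suc.IH[of J c] Suc.prems by auto
    have "\<forall>i<Suc m. (\<Sum>j\<in>J. d j * c j i) = 0"
      using d(2) True by (auto simp: less_Suc_eq)
    then show ?thesis using d(1) by blast
  next
    case False
    then obtain j0 where j0: "j0 \<in> J" "c j0 m \<noteq> 0" by auto
    define J' where "J' = J - {j0}"
    define c' where "c' j i = c j i - (c j m / c j0 m) * c j0 i" for j i
    have fJ': "finite J'" "m < card J'" using Suc.prems j0 by (auto simp: J'_def)
    obtain d' where d': "\<exists>j\<in>J'. d' j \<noteq> 0" "\<forall>i<m. (\<Sum>j\<in>J'. d' j * c' j i) = 0"
      using Suc.IH[OF fJ'] by blast
    define d where "d j = (if j = j0 then - (\<Sum>j\<in>J'. d' j * c j m) / c j0 m else d' j)" for j
    have sJ: "(\<Sum>j\<in>J. d j * c j i) = d j0 * c j0 i + (\<Sum>j\<in>J'. d' j * c j i)" for i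
    proof -
      have "(\<Sum>j\<in>J. d j * c j i) = d j0 * c j0 i + (\<Sum>j\<in>J'. d j * c j i)"
        using Suc.prems(1) j0 by (simp add: J'_def sum.remove)
      moreover have "(\<Sum>j\<in>J'. d j * c j i) = (\<Sum>j\<in>J'. d' j * c j i)"
        by (rule sum.cong) (auto simp: d_def J'_def)
      ultimately show ?thesis by simp
    qed
    have "\<forall>i<Suc m. (\<Sum>j\<in>J. d j * c j i) = 0"
    proof (intro allI impI)
      fix i assume "i < Suc m"
      then consider "i < m" | "i = m" by linarith
      then show "(\<Sum>j\<in>J. d j * c j i) = 0"
      proof cases
        case 1
        have "(\<Sum>j\<in>J'. d' j * c' j i) = (\<Sum>j\<in>J'. d' j * c j i) - (\<Sum>j\<in>J'. d' j * c j m) / c j0 m * c j0 i"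
          by (simp add: c'_def algebra_simps sum_subtractf sum_distrib_left sum_distrib_right sum_divide_distrib)
        then have "(\<Sum>j\<in>J'. d' j * c j i) = (\<Sum>j\<in>J'. d' j * c j m) / c j0 m * c j0 i"
          using d'(2) 1 by simp
        then show ?thesis using sJ[of i] by (simp add: d_def)
      next
        case 2
        then show ?thesis using sJ[of m] j0 by (simp add: d_def)
      qed
    qed
    moreover have "\<exists>j\<in>J. d j \<noteq> 0" using d'(1) by (auto simp: d_def J'_def)
    ultimately show ?thesis by blast
  qed
qed

lemma subspace_sum:
  assumes "lin_subspace V Y" "finite J" "\<forall>j\<in>J. y j \<in> Y"
  shows "(\<lambda>kk l. \<Sum>j\<in>J. d j * y j kk l) \<in> Y"
  using assms(2,3)
proof (induction J rule: finite_induct)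
  case empty
  have "(\<lambda>kk l. \<Sum>j\<in>{}. d j * y j kk l) = vzero" by (simp add: vzero_def)
  then show ?case using assms(1) by (simp add: lin_subspace_def)
next
  case (insert x F)
  have "(\<lambda>kk l. \<Sum>j\<in>insert x F. d j * y j kk l) = vadd (vscale (d x) (y x)) (\<lambda>kk l. \<Sum>j\<in>F. d j * y j kk l)"
    using insert.hyps by (simp add: vadd_def vscale_def)
  then show ?case using assms(1) insert by (simp add: lin_subspace_def)
qed



definition un :: "nat \<Rightarrow> nat \<Rightarrow> real" where
  "un n = (\<lambda>e. if e = n then 1 else 0)"

lemma un_norm: "0 < p \<Longrightarrow> summable (\<lambda>e. \<bar>un n e\<bar> powr p) \<and> (\<Sum>e. \<bar>un n e\<bar> powr p) = 1"
proof -
  assume p: "0 < p"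
  have e: "(\<lambda>e. \<bar>un n e\<bar> powr p) = (\<lambda>e. if e = n then 1 else 0)"
    using p by (auto simp: un_def)
  show ?thesis unfolding e using sums_single[of n "\<lambda>_. 1::real"] sums_summable sums_unique by force
qed

lemma step:
  assumes p: "0 < p" and q: "1 \<le> q" and c: "nc p c" and ik: "i < k"
    and Y: "closed_fincodim (Xomega p q) (Xomega_norm p q) Y"
  shows "\<exists>e. nc p (c(i := e)) \<and> xv k (c(i := e)) i \<in> Y"
proof -
  have lin: "lin_subspace (Xomega p q) Y" using Y by (simp add: closed_fincodim_def)
  obtain m f where dec: "\<forall>v\<in>Xomega p q. \<exists>y\<in>Y. \<exists>cf. v = vadd y (vsum m (\<lambda>i. vscale (cf i) (f i)))"
    using Y by (auto simp: closed_fincodim_def finite_codim_def)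
  define v where "v n = xv k (c(i := un n)) i" for n
  have vV: "v n \<in> Xomega p q" for n
    unfolding v_def using un_norm[OF p, of n] by (intro xv_mem[OF p q] nc_upd[OF c]) auto
  have "\<forall>n. \<exists>y cf. y \<in> Y \<and> v n = vadd y (vsum m (\<lambda>i. vscale (cf i) (f i)))"
    using dec vV by blast
  then obtain yy cf where yy: "\<And>n. yy n \<in> Y" "\<And>n. v n = vadd (yy n) (vsum m (\<lambda>i'. vscale (cf n i') (f i')))"
    by metis
  obtain d where d: "\<exists>j\<in>{..m}. d j \<noteq> 0" "\<forall>i'<m. (\<Sum>j\<in>{..m}. d j * cf j i') = 0"
    using dep[of "{..m}" m cf] by auto
  define e0 where "e0 x = (if x \<le> m then d x else 0)" for x
  have wY: "(\<lambda>kk l. \<Sum>j\<in>{..m}. d j * yy j kk l) \<in> Y"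
    using subspace_sum[OF lin, of "{..m}" yy d] yy(1) by auto
  have wx: "(\<lambda>kk l. \<Sum>j\<in>{..m}. d j * yy j kk l) = xv k (c(i := e0)) i"
  proof (intro ext)
    fix kk l
    have y1: "yy j kk l = v j kk l - (\<Sum>i'<m. cf j i' * f i' kk l)" for j
      using yy(2)[of j] by (simp add: vadd_def vsum_def vscale_def fun_eq_iff)
    have "(\<Sum>j\<in>{..m}. d j * (\<Sum>i'<m. cf j i' * f i' kk l)) = (\<Sum>i'<m. (\<Sum>j\<in>{..m}. d j * cf j i') * f i' kk l)"
      by (simp add: sum_distrib_left sum_distrib_right mult_ac sum.swap[of _ "{..m}"])
    also have "\<dots> = 0" using d(2) by simp
    finally have z: "(\<Sum>j\<in>{..m}. d j * (\<Sum>i'<m. cf j i' * f i' kk l)) = 0" .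
    have "(\<Sum>j\<in>{..m}. d j * yy j kk l) = (\<Sum>j\<in>{..m}. d j * v j kk l)"
      unfolding y1 using z by (simp add: right_diff_distrib sum_subtractf)
    also have "\<dots> = xv k (c(i := e0)) i kk l"
    proof (cases "kk = k \<and> length l = Suc i")
      case True
      define P where "P = (\<Prod>t<i. c t (l!t))"
      have P: "(\<Prod>t<i. (c(i := g)) t (l!t)) = P" for g unfolding P_def
        by (rule prod.cong) auto
      have "(\<Sum>j\<in>{..m}. d j * v j kk l) = (\<Sum>j\<in>{..m}. P * (d j * un j (l!i)))"
        using True by (intro sum.cong) (simp_all add: v_def xv_explicit[OF ik] P P_def mult_ac)
      also have "\<dots> = P * (\<Sum>j\<in>{..m}. d j * un j (l!i))" by (simp add: sum_distrib_left)
      also have "(\<Sum>j\<in>{..m}. d j * un j (l!i)) = e0 (l!i)"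
        by (simp add: un_def e0_def if_distrib[of "\<lambda>x. d _ * x"] cong: if_cong)
      finally show ?thesis using True by (simp add: xv_explicit[OF ik] P P_def)
    next
      case False
      then show ?thesis by (auto simp add: v_def xv_explicit[OF ik])
    qed
    finally show "(\<Sum>j\<in>{..m}. d j * yy j kk l) = xv k (c(i := e0)) i kk l" .
  qed
  define S where "S = (\<Sum>x\<in>{..m}. \<bar>e0 x\<bar> powr p)"
  have Sp: "0 < S"
  proof -
    obtain j where j: "j \<le> m" "d j \<noteq> 0" using d(1) by auto
    have "\<bar>e0 j\<bar> powr p \<le> S" unfolding S_def using j
      by (intro member_le_sum) auto
    moreover have "0 < \<bar>e0 j\<bar> powr p" using j by (simp add: e0_def)
    ultimately show ?thesis by linarith
  qed
  define r where "r = S powr (-1/p)"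
  have rp: "0 < r" using Sp by (simp add: r_def)
  define e1 where "e1 x = r * e0 x" for x
  have fin: "\<And>x. x \<notin> {..m} \<Longrightarrow> \<bar>e1 x\<bar> powr p = 0" by (simp add: e1_def e0_def)
  have sm: "summable (\<lambda>x. \<bar>e1 x\<bar> powr p)" by (rule summable_finite[of "{..m}"]) (simp_all add: fin)
  have "(\<Sum>x. \<bar>e1 x\<bar> powr p) = (\<Sum>x\<in>{..m}. \<bar>e1 x\<bar> powr p)" by (rule suminf_finite[of "{..m}"]) (simp_all add: fin)
  also have "\<dots> = r powr p * S" unfolding S_def e1_def
    using rp by (simp add: abs_mult powr_mult sum_distrib_left)
  also have "r powr p = S powr (-1)" using p Sp by (simp add: r_def powr_powr)
  also have "S powr (-1) * S = 1" using Sp by (simp add: powr_minus)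
  finally have s1: "(\<Sum>x. \<bar>e1 x\<bar> powr p) = 1" .
  have "xv k (c(i := e1)) i = vscale r (xv k (c(i := e0)) i)"
  proof (intro ext)
    fix kk l
    have P: "(\<Prod>t<i. (c(i := g)) t (l!t)) = (\<Prod>t<i. c t (l!t))" for g
      by (rule prod.cong) auto
    show "xv k (c(i := e1)) i kk l = vscale r (xv k (c(i := e0)) i) kk l"
      by (simp add: xv_explicit[OF ik] vscale_def P e1_def)
  qed
  then have "xv k (c(i := e1)) i \<in> Y" using wx wY lin by (simp add: lin_subspace_def)
  moreover have "nc p (c(i := e1))" using nc_upd[OF c sm s1] .
  ultimately show ?thesis by blast
qed



lemma xv_local:
  assumes "i < k" "i < j"
  shows "xv k (c(j := e)) i = xv k c i"
proof (intro ext)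
  fix kk l
  have P: "(\<Prod>t<i. (c(j := e)) t (l!t)) = (\<Prod>t<i. c t (l!t))"
    using assms by (intro prod.cong) auto
  show "xv k (c(j := e)) i kk l = xv k c i kk l"
    using assms by (simp add: xv_explicit P)
qed

lemma game:
  assumes p: "0 < p" and q: "1 \<le> q" and C: "1 \<le> C"
  shows "\<forall>c j. nc p c \<longrightarrow> j + n = k \<longrightarrow>
    asym_game (Xomega p q) (Xomega_norm p q) n (\<lambda>xs. C_equivalent (Xomega_norm p q) k xs (lq_norm q k) C) (map (xv k c) [0..<j])"
proof (induction n)
  case 0
  show ?case
  proof (intro allI impI)
    fix c and j :: nat
    assume c: "nc p c" and jk: "j + 0 = k"
    have e: "vsum k (\<lambda>i. vscale (a i) (map (xv k c) [0..<j] ! i)) = vsum k (\<lambda>i. vscale (a i) (xv k c i))" for a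
      using jk by (simp add: vsum_def)
    show "asym_game (Xomega p q) (Xomega_norm p q) 0 (\<lambda>xs. C_equivalent (Xomega_norm p q) k xs (lq_norm q k) C) (map (xv k c) [0..<j])"
      unfolding asym_game.simps C_equivalent_def e xv_comb_norm[OF p q c]
      using C by (intro exI[where x=1]) auto
  qed
next
  case (Suc n)
  show ?case
  proof (intro allI impI)
    fix c and j :: nat
    assume c: "nc p c" and jk: "j + Suc n = k"
    have jk': "j < k" using jk by simp
    show "asym_game (Xomega p q) (Xomega_norm p q) (Suc n) (\<lambda>xs. C_equivalent (Xomega_norm p q) k xs (lq_norm q k) C) (map (xv k c) [0..<j])"
      unfolding asym_game.simps
    proof (intro allI impI)
      fix Y assume Y: "closed_fincodim (Xomega p q) (Xomega_norm p q) Y"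
      obtain e where e: "nc p (c(j := e))" "xv k (c(j := e)) j \<in> Y"
        using step[OF p q c jk' Y] by blast
      have n1: "Xomega_norm p q (xv k (c(j := e)) j) = 1" using xv_norm[OF p q e(1) jk'] .
      have m: "map (xv k c) [0..<j] @ [xv k (c(j := e)) j] = map (xv k (c(j := e))) [0..<Suc j]"
        using jk' xv_local[of _ k j c e] by simp
      have "asym_game (Xomega p q) (Xomega_norm p q) n (\<lambda>xs. C_equivalent (Xomega_norm p q) k xs (lq_norm q k) C) (map (xv k (c(j := e))) [0..<Suc j])"
        using Suc.IH e(1) jk by (metis add_Suc_shift)
      then show "\<exists>x\<in>Y. Xomega_norm p q x = 1 \<and> asym_game (Xomega p q) (Xomega_norm p q) n (\<lambda>xs. C_equivalent (Xomega_norm p q) k xs (lq_norm q k) C) (map (xv k c) [0..<j] @ [x])"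
        using e(2) n1 m by metis
    qed
  qed
qed

theorem corollary5p6:
  fixes p :: real and q :: ereal and k :: nat
  assumes "1 < p" and "1 \<le> q"
  shows "asym_struct (Xomega p q) (Xomega_norm p q) k (lq_norm q k)"
proof -
  have p: "0 < p" using assms(1) by simp
  have c0: "nc p (\<lambda>t. un 0)" using un_norm[OF p, of 0] by (simp add: nc_def)
  show ?thesis unfolding asym_struct_def
  proof (intro conjI allI impI)
    show "is_norm_Rk k (lq_norm q k)" by (rule lq_is_norm[OF assms(2)])
    show "basis_normalized_monotone k (lq_norm q k)" by (rule lq_bnm[OF assms(2)])
    fix \<epsilon> :: real assume "0 < \<epsilon>"
    then have "1 \<le> 1 + \<epsilon>" by simp
    from game[OF p assms(2) this, of k] c0
    show "asym_game (Xomega p q) (Xomega_norm p q) k (\<lambda>xs. C_equivalent (Xomega_norm p q) k xs (lq_norm q k) (1 + \<epsilon>)) []"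
      by (metis add_0 list.simps(8) upt_0)
  qed
qed

end
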